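(* Let $\mathbb F=\mathbb R$ or $\mathbb C$, $G$ an algebraic group over $\mathbb F$ and $\rho:G\to\mathrm{GL}(V)$ a rational representation on an $n$-dimensional space with $\rho(G)\subseteq\mathrm{SL}(V)$, and $0<k<n$. Let $U\subseteq V\otimes\mathbb F^k$ and $\pi_{k,V}$ be as below. Then for every $T\in U$ there is an isomorphism of algebraic groups $\mathrm{Stab}_G(\pi_{k,V}(T))\cong\mathrm{Stab}_{G\times\mathrm{SL}_k}(T)$.
   Context: $U=\{\sum_{i=1}^kv_i\otimes e_i: v_1,\dots,v_k\in V\text{ linearly independent}\}$, $e_i$ the standard basis of $\mathbb F^k$; $\pi_{k,V}(\sum_iv_i\otimes e_i)=v_1\wedge\cdots\wedge v_k\in\bigwedge^kV$. $G$ acts on $\bigwedge^kV$ via $\rho$, and $G\times\mathrm{SL}_k$ acts on $V\otimes\mathbb F^k$ by $(g,A)\cdot(v\otimes w)=\rho(g)v\otimes Aw$. *)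

theory Defs
  imports "HOL-Analysis.Analysis"
begin

inductive_set polys :: "('x \<Rightarrow> 'a::comm_ring_1) set \<Rightarrow> ('x \<Rightarrow> 'a) set"
  for C :: "('x \<Rightarrow> 'a) set" where
  const: "(\<lambda>x. c) \<in> polys C"
| coord: "f \<in> C \<Longrightarrow> f \<in> polys C"
| add: "f \<in> polys C \<Longrightarrow> g \<in> polys C \<Longrightarrow> (\<lambda>x. f x + g x) \<in> polys C"
| mult: "f \<in> polys C \<Longrightarrow> g \<in> polys C \<Longrightarrow> (\<lambda>x. f x * g x) \<in> polys C"

text \<open>Coordinate ring of GL_m: the matrix entries and the inverse of the determinant.\<close>
definition mat_coords :: "('a::field ^'m^'m \<Rightarrow> 'a) set" where
  "mat_coords = {(\<lambda>M. M $ i $ j) | i j. True} \<union> {(\<lambda>M. inverse (det M))}"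

definition prod_coords :: "('x \<Rightarrow> 'a) set \<Rightarrow> ('y \<Rightarrow> 'a) set \<Rightarrow> ('x \<times> 'y \<Rightarrow> 'a) set" where
  "prod_coords CX CY = (\<lambda>c. c \<circ> fst) ` CX \<union> (\<lambda>c. c \<circ> snd) ` CY"

definition regular_map :: "('x \<Rightarrow> 'a::comm_ring_1) set \<Rightarrow> ('y \<Rightarrow> 'a) set \<Rightarrow> 'x set \<Rightarrow> ('x \<Rightarrow> 'y) \<Rightarrow> bool" where
  "regular_map CX CY X f \<longleftrightarrow> (\<forall>c\<in>CY. \<exists>p\<in>polys CX. \<forall>x\<in>X. c (f x) = p x)"

definition lin_alg_group :: "('a::field ^'m^'m) set \<Rightarrow> bool" where
  "lin_alg_group G \<longleftrightarrow>
     (\<exists>P \<subseteq> polys mat_coords. G = {M. invertible M \<and> (\<forall>p\<in>P. p M = 0)}) \<and>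
     mat 1 \<in> G \<and> (\<forall>g\<in>G. \<forall>h\<in>G. g ** h \<in> G) \<and> (\<forall>g\<in>G. \<exists>h\<in>G. g ** h = mat 1)"

definition rational_rep :: "('a::field ^'m^'m) set \<Rightarrow> ('a^'m^'m \<Rightarrow> 'a^'n^'n) \<Rightarrow> bool" where
  "rational_rep G \<rho> \<longleftrightarrow>
     (\<forall>g\<in>G. invertible (\<rho> g)) \<and>
     (\<forall>g\<in>G. \<forall>h\<in>G. \<rho> (g ** h) = \<rho> g ** \<rho> h) \<and>
     regular_map mat_coords mat_coords G \<rho>"

definition alg_group_iso ::
  "('x \<Rightarrow> 'a::comm_ring_1) set \<Rightarrow> ('y \<Rightarrow> 'a) set \<Rightarrow> ('x \<Rightarrow> 'x \<Rightarrow> 'x) \<Rightarrow> ('y \<Rightarrow> 'y \<Rightarrow> 'y)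
     \<Rightarrow> 'x set \<Rightarrow> 'y set \<Rightarrow> bool" where
  "alg_group_iso CX CY mx my X Y \<longleftrightarrow>
     (\<exists>\<phi>. bij_betw \<phi> X Y \<and> (\<forall>x\<in>X. \<forall>y\<in>X. \<phi> (mx x y) = my (\<phi> x) (\<phi> y)) \<and>
          regular_map CX CY X \<phi> \<and> regular_map CY CX Y (the_inv_into X \<phi>))"

text \<open>Elements of V \<otimes> F^k are represented as n\<times>k matrices; v \<otimes> w is the matrix v w^T.\<close>
definition tensor :: "'a::comm_ring_1 ^'n \<Rightarrow> 'a^'k \<Rightarrow> 'a^'k^'n" where
  "tensor v w = (\<chi> i j. v $ i * w $ j)"

text \<open>Action of (g,A) on V \<otimes> F^k: the linear map with v \<otimes> w \<mapsto> \<rho>(g) v \<otimes> A w, i.e. T \<mapsto> \<rho>(g) T A^T.\<close>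
definition tensor_act :: "'a::comm_ring_1 ^'n^'n \<Rightarrow> 'a^'k^'k \<Rightarrow> 'a^'k^'n \<Rightarrow> 'a^'k^'n" where
  "tensor_act M A T = M ** T ** transpose A"

definition U_set :: "('a::field ^'k^'n) set" where
  "U_set = {(\<Sum>i\<in>UNIV. tensor (v i) (axis i 1)) | v.
              \<forall>c::'k \<Rightarrow> 'a. (\<Sum>i\<in>UNIV. c i *s v i) = 0 \<longrightarrow> (\<forall>i. c i = 0)}"

text \<open>\<Lambda>^k V realised as alternating k-linear forms on V^*, i.e. functions on index maps 'k \<Rightarrow> 'n:
  (v_1 \<and> ... \<and> v_k)(f) = det [v_j(f i)].  pi_kV (sum v_i \<otimes> e_i) = v_1 \<and> ... \<and> v_k.\<close>
definition pi_kV :: "'a::comm_ring_1 ^'k^'n \<Rightarrow> (('k \<Rightarrow> 'n) \<Rightarrow> 'a)" where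
  "pi_kV T = (\<lambda>f. det (\<chi> i j. T $ (f i) $ j))"

text \<open>Induced action of M \<in> GL(V) on \<Lambda>^k V \<subseteq> V^{\<otimes>k}.\<close>
definition ext_act :: "'a::comm_ring_1 ^'n^'n \<Rightarrow> (('k \<Rightarrow> 'n) \<Rightarrow> 'a) \<Rightarrow> (('k \<Rightarrow> 'n) \<Rightarrow> 'a)" where
  "ext_act M \<omega> = (\<lambda>f. \<Sum>h\<in>UNIV. (\<Prod>i\<in>UNIV. M $ (f i) $ (h i)) * \<omega> h)"

end

theory Submission
  imports Defs
begin


lemma det_rows_sum_gen:
  fixes a :: "'n::finite \<Rightarrow> 'm::finite \<Rightarrow> 'a::comm_ring_1^'n"
  assumes fT: "finite T"
  shows "det (\<chi> i. if i \<in> T then sum (a i) UNIV else c i) =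
    (\<Sum>f\<in>{f. \<forall>i. i \<notin> T \<longrightarrow> f i = d}. det (\<chi> i. if i \<in> T then a i (f i) else c i))"
  using fT
proof (induct T arbitrary: c set: finite)
  case empty
  have "{f::'n\<Rightarrow>'m. \<forall>i. f i = d} = {\<lambda>_. d}" by auto
  then show ?case by simp
next
  case (insert z T c)
  let ?F = "\<lambda>T. {f::'n\<Rightarrow>'m. \<forall>i. i \<notin> T \<longrightarrow> f i = d}"
  have "det (\<chi> i. if i \<in> insert z T then sum (a i) UNIV else c i) =
    det (\<chi> i. if i = z then sum (a i) UNIV else (if i \<in> T then sum (a i) UNIV else c i))"
    by (rule arg_cong[where f=det]) (simp add: vec_eq_iff)
  also have "\<dots> = (\<Sum>j\<in>UNIV. det (\<chi> i. if i = z then a i j else (if i \<in> T then sum (a i) UNIV else c i)))"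
    by (rule det_linear_row_sum) simp
  also have "\<dots> = (\<Sum>j\<in>UNIV. det (\<chi> i. if i \<in> T then sum (a i) UNIV else (if i = z then a i j else c i)))"
    using insert.hyps(2) by (intro sum.cong refl arg_cong[where f=det]) (auto simp: vec_eq_iff)
  also have "\<dots> = (\<Sum>j\<in>UNIV. \<Sum>f\<in>?F T. det (\<chi> i. if i \<in> T then a i (f i) else (if i = z then a i j else c i)))"
    by (simp only: insert.hyps(3))
  also have "\<dots> = (\<Sum>(j,f)\<in>UNIV \<times> ?F T. det (\<chi> i. if i \<in> T then a i (f i) else (if i = z then a i j else c i)))"
    by (rule sum.cartesian_product)
  also have "\<dots> = (\<Sum>f\<in>?F (insert z T). det (\<chi> i. if i \<in> insert z T then a i (f i) else c i))"
    using insert.hyps(2)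
    by (intro sum.reindex_bij_witness[where i="\<lambda>h. (h z, h(z:=d))" and j="\<lambda>(j,h). h(z:=j)"])
       (auto intro!: arg_cong[where f=det] simp: vec_eq_iff)
  finally show ?case .
qed

lemma det_rows_sum_all:
  fixes a :: "'n::finite \<Rightarrow> 'm::finite \<Rightarrow> 'a::comm_ring_1^'n"
  shows "det (\<chi> i. sum (a i) UNIV) = (\<Sum>f\<in>UNIV. det (\<chi> i. a i (f i)))"
  using det_rows_sum_gen[of "UNIV::'n set" a c d] by simp



lemma polys_sum:
  assumes "finite S" "\<And>i. i \<in> S \<Longrightarrow> f i \<in> polys C"
  shows "(\<lambda>x. \<Sum>i\<in>S. f i x) \<in> polys C"
  using assms
proof (induction S rule: finite_induct)
  case empty
  then show ?case using polys.const[of 0 C] by simp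
next
  case (insert a S)
  then show ?case using polys.add[of "f a" C "\<lambda>x. \<Sum>i\<in>S. f i x"] by simp
qed

lemma polys_prod:
  assumes "finite S" "\<And>i. i \<in> S \<Longrightarrow> f i \<in> polys C"
  shows "(\<lambda>x. \<Prod>i\<in>S. f i x) \<in> polys C"
  using assms
proof (induction S rule: finite_induct)
  case empty
  then show ?case using polys.const[of 1 C] by simp
next
  case (insert a S)
  then show ?case using polys.mult[of "f a" C "\<lambda>x. \<Prod>i\<in>S. f i x"] by simp
qed

lemma polys_det:
  fixes F :: "'x \<Rightarrow> 'a::comm_ring_1^'n^'n"
  assumes "\<And>i j. (\<lambda>x. F x $ i $ j) \<in> polys C"
  shows "(\<lambda>x. det (F x)) \<in> polys C"
proof -
  have "(\<lambda>x. \<Sum>p\<in>{p. p permutes (UNIV::'n set)}. of_int (sign p) * (\<Prod>i\<in>UNIV. F x $ i $ p i)) \<in> polys C"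
    apply (rule polys_sum)
     apply simp
    apply (rule polys.mult[OF polys.const])
    apply (rule polys_prod)
    using assms by auto
  then show ?thesis unfolding det_def .
qed

lemma polys_if: "f \<in> polys C \<Longrightarrow> (\<lambda>x. if b then c else f x) \<in> polys C"
  by (cases b) (auto intro: polys.const)

definition adjm :: "'a::field^'n^'n \<Rightarrow> 'a^'n^'n" where
  "adjm M = (\<chi> a b. det (\<chi> r c. if c = a then axis b 1 $ r else M $ r $ c))"

lemma adjm_right:
  fixes M :: "'a::field^'n^'n"
  assumes "det M = 1"
  shows "M ** adjm M = mat 1"
proof -
  have col: "M *v (\<chi> a. adjm M $ a $ b) = axis b 1" for b
  proof -
    have "M *v (\<chi> a. adjm M $ a $ b) = axis b 1 \<longleftrightarrow> (\<chi> a. adjm M $ a $ b) =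
       (\<chi> k. det(\<chi> i j. if j=k then (axis b 1 :: 'a^'n)$i else M$i$j) / det M)"
      by (rule cramer) (simp add: assms)
    then show ?thesis by (simp add: assms adjm_def)
  qed
  show ?thesis
  proof (rule iffD2[OF vec_eq_iff], intro allI, rule iffD2[OF vec_eq_iff], intro allI)
    fix i b
    have "(M ** adjm M) $ i $ b = (M *v (\<chi> a. adjm M $ a $ b)) $ i"
      by (simp add: matrix_matrix_mult_def matrix_vector_mult_def)
    also have "\<dots> = mat 1 $ i $ b" unfolding col by (simp add: axis_def mat_def)
    finally show "(M ** adjm M) $ i $ b = mat 1 $ i $ b" .
  qed
qed

lemma adjm_left:
  fixes M :: "'a::field^'n^'n"
  assumes "det M = 1"
  shows "adjm M ** M = mat 1"
  using adjm_right[OF assms] matrix_left_right_inverse by blast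

lemma pi_kV_alt: "pi_kV T f = det (\<chi> i. T $ f i)"
  unfolding pi_kV_def by (simp add: vec_lambda_eta)

lemma mult_row: "((M::'a::comm_ring_1^'n^'p) ** T) $ p = (\<Sum>a\<in>UNIV. M$p$a *s T$a)"
  by (simp add: vec_eq_iff matrix_matrix_mult_def sum_component)

lemma ext_gen:
  fixes M :: "'a::comm_ring_1^'n^'p" and T :: "'a^'k^'n" and f :: "'k \<Rightarrow> 'p"
  shows "det (\<chi> i. (M ** T) $ (f i)) = (\<Sum>h\<in>UNIV. (\<Prod>i\<in>UNIV. M$(f i)$(h i)) * pi_kV T h)"
proof -
  have "det (\<chi> i. (M ** T) $ (f i)) = det (\<chi> i. \<Sum>a\<in>UNIV. M$(f i)$a *s T$a)"
    by (simp add: mult_row)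
  also have "\<dots> = (\<Sum>h\<in>UNIV. det (\<chi> i. M$(f i)$(h i) *s T$(h i)))"
    by (rule det_rows_sum_all)
  also have "\<dots> = (\<Sum>h\<in>UNIV. (\<Prod>i\<in>UNIV. M$(f i)$(h i)) * pi_kV T h)"
    by (simp add: det_rows_mul pi_kV_alt)
  finally show ?thesis .
qed

lemma ext_act_pi: "ext_act (M::'a::comm_ring_1^'n^'n) (pi_kV (T::'a^'k^'n)) = pi_kV (M ** T)"
  unfolding ext_act_def
  by (rule ext, subst (2) pi_kV_alt, simp add: ext_gen)

lemma row_mult: "((T::'a::comm_ring_1^'k^'n) ** C) $ r = T $ r v* C"
  by (simp add: vec_eq_iff matrix_matrix_mult_def vector_matrix_mult_def mult.commute)

lemma pi_mult: "pi_kV ((T::'a::comm_ring_1^'k^'n) ** C) h = pi_kV T h * det C"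
proof -
  have "(\<chi> i. (T ** C) $ h i) = (\<chi> i. T $ h i) ** C"
    by (simp add: vec_eq_iff matrix_matrix_mult_def)
  then show ?thesis by (simp add: pi_kV_alt det_mul)
qed

lemma nonzero_minor:
  fixes T :: "'a::comm_ring_1^'k^'n" and L :: "'a^'n^'k"
  assumes "L ** T = mat 1"
  shows "\<exists>h. pi_kV T h \<noteq> 0"
proof (rule ccontr)
  assume "\<not> ?thesis"
  then have "det (\<chi> i. (L ** T) $ (id i)) = 0" unfolding ext_gen by simp
  moreover have "(\<chi> i. (L ** T) $ (id i)) = mat 1" by (simp add: assms vec_lambda_eta)
  ultimately show False by simp
qed

lemma cramer_row:
  fixes A :: "'a::field^'n^'n"
  shows "det (\<chi> i. if i = k then v v* A else A $ i) = v $ k * det A"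
proof -
  have vv: "v v* A = (\<Sum>i\<in>UNIV. v$i *s row i A)"
    by (simp add: vec_eq_iff vector_matrix_mult_def sum_component row_def mult.commute)
  have r: "\<And>i. row i A = A $ i" by (simp add: row_def vec_lambda_eta)
  have "det (\<chi> i. if i = k then v v* A else A $ i) = det (\<chi> i. if i = k then (\<Sum>i\<in>UNIV. v$i *s row i A) else row i A)"
    by (simp only: vv r)
  then show ?thesis using cramer_lemma_transpose[of k v A] by simp
qed


lemma same_minors:
  fixes S T :: "'a::field^'k^'n"
  assumes eq: "pi_kV S = pi_kV T" and nz: "pi_kV T f \<noteq> 0"
  shows "\<exists>C. S = T ** C \<and> det C = 1"
proof -
  define P where "P = (\<chi> i. T $ f i)"
  define Q where "Q = (\<chi> i. S $ f i)"
  have dP: "det P = pi_kV T f" by (simp add: P_def pi_kV_alt)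
  have dQ: "det Q = pi_kV T f" using eq by (simp add: Q_def pi_kV_alt[symmetric])
  obtain Pi where Pi: "Pi ** P = mat 1" "P ** Pi = mat 1"
    using nz dP invertible_det_nz[of P] unfolding invertible_def by metis
  obtain Qi where Qi: "Qi ** Q = mat 1" "Q ** Qi = mat 1"
    using nz dQ invertible_det_nz[of Q] unfolding invertible_def by metis
  define C where "C = Pi ** Q"
  have "det Pi * det P = 1" using Pi(1) by (metis det_I det_mul)
  then have dC: "det C = 1" using dP dQ by (simp add: C_def det_mul)
  have "S $ r = (T ** C) $ r" for r
  proof -
    define x where "x = T $ r v* Pi"
    define y where "y = S $ r v* Qi"
    have Tr: "T $ r = x v* P" by (simp add: x_def vector_matrix_mul_assoc Pi)
    have Sr: "S $ r = y v* Q" by (simp add: y_def vector_matrix_mul_assoc Qi)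
    have "x $ k = y $ k" for k
    proof -
      have "(\<chi> i. T $ (f(k:=r)) i) = (\<chi> i. if i = k then x v* P else P $ i)"
        unfolding Tr[symmetric] by (simp add: vec_eq_iff P_def)
      then have 1: "pi_kV T (f(k:=r)) = x $ k * pi_kV T f"
        by (simp add: pi_kV_alt cramer_row dP)
      have "(\<chi> i. S $ (f(k:=r)) i) = (\<chi> i. if i = k then y v* Q else Q $ i)"
        unfolding Sr[symmetric] by (simp add: vec_eq_iff Q_def)
      then have 2: "pi_kV S (f(k:=r)) = y $ k * pi_kV T f"
        by (simp add: pi_kV_alt cramer_row dQ)
      from 1 2 eq nz show ?thesis by simp
    qed
    then have "x = y" by (simp add: vec_eq_iff)
    then show ?thesis
      by (simp add: Sr row_mult C_def x_def vector_matrix_mul_assoc[symmetric])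
  qed
  then have "S = T ** C" by (simp add: vec_eq_iff)
  with dC show ?thesis by blast
qed


theorem lemma3p2:
  fixes G :: "('a::real_normed_field ^'m^'m) set"
    and \<rho> :: "'a^'m^'m \<Rightarrow> 'a^'n^'n"
    and T :: "'a^'k^'n"
  assumes "lin_alg_group G"
    and "rational_rep G \<rho>"
    and "\<forall>g\<in>G. det (\<rho> g) = 1"
    and "CARD('k) < CARD('n)"
    and "T \<in> U_set"
  shows "alg_group_iso mat_coords (prod_coords mat_coords mat_coords)
           (\<lambda>g h. g ** h) (\<lambda>(g, A) (h, B). (g ** h, A ** B))
           {g \<in> G. ext_act (\<rho> g) (pi_kV T) = pi_kV T}
           {(g, A). g \<in> G \<and> det A = 1 \<and> tensor_act (\<rho> g) A T = T}"
proof -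
  define X where "X = {g \<in> G. ext_act (\<rho> g) (pi_kV T) = pi_kV T}"
  define Y where "Y = {(g, A). g \<in> G \<and> det A = 1 \<and> tensor_act (\<rho> g) A T = T}"
  have Gmul: "\<And>g h. g \<in> G \<Longrightarrow> h \<in> G \<Longrightarrow> g ** h \<in> G"
    using assms(1) unfolding lin_alg_group_def by blast
  have rmul: "\<And>g h. g \<in> G \<Longrightarrow> h \<in> G \<Longrightarrow> \<rho> (g ** h) = \<rho> g ** \<rho> h"
    using assms(2) unfolding rational_rep_def by blast
  have rreg: "regular_map mat_coords mat_coords G \<rho>"
    using assms(2) unfolding rational_rep_def by blast
  have d1: "\<And>g. g \<in> G \<Longrightarrow> det (\<rho> g) = 1" using assms(3) by blast
  obtain v where Tv: "T = (\<Sum>i\<in>UNIV. tensor (v i) (axis i 1))"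
    and indep: "\<forall>c::'k \<Rightarrow> 'a. (\<Sum>i\<in>UNIV. c i *s v i) = 0 \<longrightarrow> (\<forall>i. c i = 0)"
    using assms(5) unfolding U_set_def by blast
  have Tent: "T $ a $ j = v j $ a" for a j
  proof -
    have "T $ a $ j = (\<Sum>i\<in>UNIV. v i $ a * axis i 1 $ j)"
      unfolding Tv by (simp add: sum_component tensor_def)
    also have "\<dots> = v j $ a" by (simp add: axis_def if_distrib cong: if_cong)
    finally show ?thesis .
  qed
  have "\<forall>x. T *v x = 0 \<longrightarrow> x = 0"
  proof (intro allI impI)
    fix x assume "T *v x = 0"
    then have "(\<Sum>i\<in>UNIV. x $ i *s v i) = 0"
      by (simp add: vec_eq_iff matrix_vector_mult_def sum_component Tent mult.commute)
    then show "x = 0" using indep by (simp add: vec_eq_iff)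
  qed
  from iffD2[OF matrix_left_invertible_ker this]
  obtain L :: "'a^'n^'k" where L: "L ** T = mat 1" by blast
  obtain f0 where f0: "pi_kV T f0 \<noteq> 0" using nonzero_minor[OF L] by blast
  define Ag where "Ag g = transpose (L ** adjm (\<rho> g) ** T)" for g
  have U: "A' = Ag g" if g: "g \<in> G" and eq: "\<rho> g ** T ** transpose A' = T" for g A'
  proof -
    have "adjm (\<rho> g) ** (\<rho> g ** T ** transpose A') = adjm (\<rho> g) ** T" using eq by simp
    then have "T ** transpose A' = adjm (\<rho> g) ** T"
      by (simp add: matrix_mul_assoc adjm_left d1 g)
    then have "L ** (T ** transpose A') = L ** adjm (\<rho> g) ** T"
      by (simp add: matrix_mul_assoc)
    then have "transpose A' = L ** adjm (\<rho> g) ** T"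
      by (simp add: matrix_mul_assoc L)
    then show ?thesis unfolding Ag_def by (metis transpose_transpose)
  qed
  have E: "\<rho> g ** T ** transpose (Ag g) = T \<and> det (Ag g) = 1" if g: "g \<in> X" for g
  proof -
    have gG: "g \<in> G" and st: "pi_kV (\<rho> g ** T) = pi_kV T"
      using g by (auto simp: X_def ext_act_pi)
    obtain C where C: "\<rho> g ** T = T ** C" "det C = 1" using same_minors[OF st f0] by blast
    obtain Ci where Ci: "C ** Ci = mat 1" "Ci ** C = mat 1"
      using C(2) invertible_det_nz[of C] unfolding invertible_def by auto
    have "det C * det Ci = 1" using Ci(1) by (metis det_I det_mul)
    then have dCi: "det Ci = 1" using C(2) by simp
    have 1: "\<rho> g ** T ** Ci = T" using C(1) Ci(1) by (simp add: matrix_mul_assoc[symmetric])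
    have "adjm (\<rho> g) ** (\<rho> g ** T ** Ci) = adjm (\<rho> g) ** T" using 1 by simp
    then have "T ** Ci = adjm (\<rho> g) ** T"
      by (simp add: matrix_mul_assoc adjm_left d1 gG)
    then have "L ** (T ** Ci) = L ** adjm (\<rho> g) ** T" by (simp add: matrix_mul_assoc)
    then have "Ci = L ** adjm (\<rho> g) ** T" by (simp add: matrix_mul_assoc L)
    then have "transpose (Ag g) = Ci" unfolding Ag_def by simp
    then show ?thesis using 1 dCi by (metis det_transpose)
  qed
  have R: "g \<in> X" if "(g, A') \<in> Y" for g A'
  proof -
    have gG: "g \<in> G" and eq: "\<rho> g ** T ** transpose A' = T" and dA: "det A' = 1"
      using that by (auto simp: Y_def tensor_act_def)
    have "pi_kV (\<rho> g ** T) = pi_kV T"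
      by (rule ext, subst (2) eq[symmetric]) (simp add: pi_mult det_transpose dA)
    then show ?thesis using gG by (simp add: X_def ext_act_pi del: pi_kV_def)
  qed
  define \<phi> where "\<phi> g = (g, Ag g)" for g
  have XG: "X \<subseteq> G" by (auto simp: X_def)
  have inj: "inj_on \<phi> X" by (auto simp: inj_on_def \<phi>_def)
  have img: "\<phi> ` X = Y"
  proof
    show "\<phi> ` X \<subseteq> Y" using E XG by (auto simp: \<phi>_def Y_def tensor_act_def)
    show "Y \<subseteq> \<phi> ` X"
    proof
      fix y assume y: "y \<in> Y"
      obtain g A' where gA: "y = (g, A')" by (cases y)
      have gX: "g \<in> X" using R y gA by blast
      have "A' = Ag g" using U[of g A'] y gA by (auto simp: Y_def tensor_act_def)
      then show "y \<in> \<phi> ` X" using gX gA \<phi>_def by auto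
    qed
  qed
  have hom: "\<phi> (g ** h) = (\<lambda>(g, A) (h, B). (g ** h, A ** B)) (\<phi> g) (\<phi> h)"
    if "g \<in> X" "h \<in> X" for g h
  proof -
    have gG: "g \<in> G" "h \<in> G" using that XG by auto
    have "\<rho> (g ** h) ** T ** transpose (Ag g ** Ag h) =
          \<rho> g ** (\<rho> h ** T ** transpose (Ag h)) ** transpose (Ag g)"
      by (simp add: rmul gG matrix_transpose_mul matrix_mul_assoc)
    also have "\<dots> = T" using E that by simp
    finally have "Ag g ** Ag h = Ag (g ** h)" using U Gmul gG by blast
    then show ?thesis by (simp add: \<phi>_def)
  qed
  obtain P where P: "\<And>r c. P r c \<in> polys mat_coords \<and> (\<forall>y\<in>G. \<rho> y $ r $ c = P r c y)"
  proof -
    have "\<forall>r c. \<exists>p\<in>polys mat_coords. \<forall>y\<in>G. \<rho> y $ r $ c = p y"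
    proof (intro allI)
      fix r c
      have cm: "(\<lambda>M::'a^'n^'n. M $ r $ c) \<in> mat_coords" by (auto simp: mat_coords_def)
      from bspec[OF rreg[unfolded regular_map_def] cm] show "\<exists>p\<in>polys mat_coords. \<forall>y\<in>G. \<rho> y $ r $ c = p y" by simp
    qed
    then show ?thesis using that by metis
  qed
  have reg1: "regular_map mat_coords (prod_coords mat_coords mat_coords) X \<phi>"
    unfolding regular_map_def
  proof
    fix c :: "('a^'m^'m) \<times> ('a^'k^'k) \<Rightarrow> 'a"
    assume "c \<in> prod_coords mat_coords mat_coords"
    then consider (fst) c' where "c' \<in> mat_coords" "c = c' \<circ> fst"
      | (snd) c' where "c' \<in> mat_coords" "c = c' \<circ> snd"
      unfolding prod_coords_def by blast
    then show "\<exists>p\<in>polys mat_coords. \<forall>x\<in>X. c (\<phi> x) = p x"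
    proof cases
      case fst
      then show ?thesis by (auto simp: \<phi>_def intro!: bexI[OF _ polys.coord])
    next
      case snd
      then consider (ent) i j where "c' = (\<lambda>M. M $ i $ j)" | (inv) "c' = (\<lambda>M. inverse (det M))"
        unfolding mat_coords_def by blast
      then show ?thesis
      proof cases
        case inv
        then show ?thesis using snd E
          by (auto simp: \<phi>_def intro!: bexI[OF _ polys.const[of 1]])
      next
        case ent
        define p where "p y = (\<Sum>b\<in>UNIV. (\<Sum>a\<in>UNIV. L$j$a *
              det (\<chi> r c. if c = a then axis b 1 $ r else P r c y)) * T$b$i)" for y
        have "p \<in> polys mat_coords"
          unfolding p_def
          apply (rule polys_sum, simp)
          apply (rule polys.mult[OF _ polys.const])
          apply (rule polys_sum, simp)
          apply (rule polys.mult[OF polys.const])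
          apply (rule polys_det)
          using P by (auto intro!: polys_if)
        moreover have "c (\<phi> x) = p x" if "x \<in> X" for x
        proof -
          have xG: "x \<in> G" using that XG by auto
          have "(\<chi> r c. if c = a then axis b 1 $ r else \<rho> x $ r $ c) =
                (\<chi> r c. if c = a then axis b 1 $ r else P r c x)" for a b :: 'n
            using P xG by (simp add: vec_eq_iff)
          then show ?thesis using snd ent
            by (simp add: \<phi>_def p_def Ag_def adjm_def transpose_def matrix_matrix_mult_def)
        qed
        ultimately show ?thesis by blast
      qed
    qed
  qed
  have invf: "the_inv_into X \<phi> y = fst y" if yY: "y \<in> Y" for y
  proof -
    obtain g where g: "g \<in> X" "y = \<phi> g" using yY img by blast
    then show ?thesis using the_inv_into_f_f[OF inj g(1)] by (simp add: \<phi>_def)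
  qed
  have reg2: "regular_map (prod_coords mat_coords mat_coords) mat_coords Y (the_inv_into X \<phi>)"
    unfolding regular_map_def
  proof
    fix c :: "'a^'m^'m \<Rightarrow> 'a" assume c: "c \<in> mat_coords"
    have "c \<circ> fst \<in> polys (prod_coords mat_coords mat_coords)"
      using c by (auto simp: prod_coords_def intro!: polys.coord)
    then show "\<exists>p\<in>polys (prod_coords mat_coords mat_coords). \<forall>x\<in>Y. c (the_inv_into X \<phi> x) = p x"
      using invf by (auto intro!: bexI[of _ "c \<circ> fst"])
  qed
  have "bij_betw \<phi> X Y" using inj img by (simp add: bij_betw_def)
  then show ?thesis
    unfolding alg_group_iso_def X_def[symmetric] Y_def[symmetric]
    using hom reg1 reg2 by blast
qed

end
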